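(* Let $(u_n)\subset X$ with $u_n\rightharpoonup u$ weakly in $X$. Then $\lim_{n\to\infty}\int_{\mathbb{R}^N}\int_{\mathbb{R}^N}\ln(1+|x-y|)|u_n(x)|^p|u(y)|^{p-2}u(y)(u_n(y)-u(y))\,dxdy=0$.
   Context: $s\in(0,1)$, $p>2$, $N=sp$; $W^{s,p}(\mathbb{R}^N)$ is the fractional Sobolev space with norm $\|u\|=([u]_{s,p}^p+\|u\|_p^p)^{1/p}$; $X=\{u\in W^{s,p}(\mathbb{R}^N):\int\ln(1+|x|)|u|^pdx<\infty\}$, a reflexive Banach space with norm $\|u\|_X=(\|u\|^p+\int\ln(1+|x|)|u|^pdx)^{1/p}$. *)

theory Defs
  imports "HOL-Analysis.Analysis"
begin

definition gagliardo_pow :: "real \<Rightarrow> real \<Rightarrow> ('a::euclidean_space \<Rightarrow> real) \<Rightarrow> ennreal" where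
  "gagliardo_pow s p u =
     (\<integral>\<^sup>+ x. \<integral>\<^sup>+ y. ennreal (\<bar>u x - u y\<bar> powr p / norm (x - y) powr (real DIM('a) + s * p)) \<partial>lborel \<partial>lborel)"

definition Lp_pow :: "real \<Rightarrow> ('a::euclidean_space \<Rightarrow> real) \<Rightarrow> ennreal" where
  "Lp_pow p u = (\<integral>\<^sup>+ x. ennreal (\<bar>u x\<bar> powr p) \<partial>lborel)"

definition log_pow :: "real \<Rightarrow> ('a::euclidean_space \<Rightarrow> real) \<Rightarrow> ennreal" where
  "log_pow p u = (\<integral>\<^sup>+ x. ennreal (ln (1 + norm x) * \<bar>u x\<bar> powr p) \<partial>lborel)"

definition Wsp :: "real \<Rightarrow> real \<Rightarrow> ('a::euclidean_space \<Rightarrow> real) set" where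
  "Wsp s p = {u. u \<in> borel_measurable lborel \<and> gagliardo_pow s p u < \<infinity> \<and> Lp_pow p u < \<infinity>}"

definition Xsp :: "real \<Rightarrow> real \<Rightarrow> ('a::euclidean_space \<Rightarrow> real) set" where
  "Xsp s p = {u \<in> Wsp s p. log_pow p u < \<infinity>}"

definition normX :: "real \<Rightarrow> real \<Rightarrow> ('a::euclidean_space \<Rightarrow> real) \<Rightarrow> real" where
  "normX s p u = (enn2real (gagliardo_pow s p u + Lp_pow p u + log_pow p u)) powr (1 / p)"

definition dualX :: "real \<Rightarrow> real \<Rightarrow> (('a::euclidean_space \<Rightarrow> real) \<Rightarrow> real) set" where
  "dualX s p = {f. (\<forall>u\<in>Xsp s p. \<forall>v\<in>Xsp s p. \<forall>a b.
                     f (\<lambda>x. a * u x + b * v x) = a * f u + b * f v)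
                 \<and> (\<exists>C. \<forall>u\<in>Xsp s p. \<bar>f u\<bar> \<le> C * normX s p u)}"

definition weak_convX :: "real \<Rightarrow> real \<Rightarrow> (nat \<Rightarrow> 'a::euclidean_space \<Rightarrow> real) \<Rightarrow> ('a \<Rightarrow> real) \<Rightarrow> bool" where
  "weak_convX s p U u \<longleftrightarrow> (\<forall>n. U n \<in> Xsp s p) \<and> u \<in> Xsp s p \<and>
     (\<forall>f\<in>dualX s p. (\<lambda>n. f (U n)) \<longlonglongrightarrow> f u)"

end

theory Submission
  imports Defs
begin

lemma holder_real:
  fixes a b :: "'b \<Rightarrow> real" and p q :: real
  assumes pq: "p > 1" "q > 1" "1/p + 1/q = 1"
    and nn: "\<And>x. a x \<ge> 0" "\<And>x. b x \<ge> 0"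
    and meas: "a \<in> borel_measurable M" "b \<in> borel_measurable M"
    and ia: "integrable M (\<lambda>x. a x powr p)" and ib: "integrable M (\<lambda>x. b x powr q)"
  shows "integrable M (\<lambda>x. a x * b x)"
    and "(\<integral>x. a x * b x \<partial>M) \<le> (\<integral>x. a x powr p \<partial>M) powr (1/p) * (\<integral>x. b x powr q \<partial>M) powr (1/q)"
proof -
  have young: "a x * b x \<le> a x powr p / p + b x powr q / q" for x
    using Youngs_inequality[OF pq nn(1)[of x] nn(2)[of x]] .
  show int: "integrable M (\<lambda>x. a x * b x)"
  proof (rule Bochner_Integration.integrable_bound[where f="\<lambda>x. a x powr p / p + b x powr q / q"])
    show "integrable M (\<lambda>x. a x powr p / p + b x powr q / q)" using ia ib by auto
    show "(\<lambda>x. a x * b x) \<in> borel_measurable M" using meas by auto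
    show "AE x in M. norm (a x * b x) \<le> norm (a x powr p / p + b x powr q / q)"
      using young nn pq by (auto intro!: AE_I2 simp: abs_mult)
  qed
  define A where "A = (\<integral>x. a x powr p \<partial>M)"
  define B where "B = (\<integral>x. b x powr q \<partial>M)"
  have A0: "A \<ge> 0" "B \<ge> 0" unfolding A_def B_def by (auto intro!: integral_nonneg_AE)
  show "(\<integral>x. a x * b x \<partial>M) \<le> A powr (1/p) * B powr (1/q)"
  proof (cases "A = 0 \<or> B = 0")
    case True
    have "AE x in M. a x * b x = 0"
    proof (cases "A = 0")
      case True
      have "AE x in M. a x powr p = 0"
        using integral_nonneg_eq_0_iff_AE[OF ia] True nn unfolding A_def by auto
      then show ?thesis by eventually_elim auto
    next
      case False
      then have "B = 0" using \<open>A = 0 \<or> B = 0\<close> by auto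
      have "AE x in M. b x powr q = 0"
        using integral_nonneg_eq_0_iff_AE[OF ib] \<open>B = 0\<close> nn unfolding B_def by auto
      then show ?thesis by eventually_elim auto
    qed
    then have "(\<integral>x. a x * b x \<partial>M) = 0"
      by (simp add: integral_eq_zero_AE)
    then show ?thesis using A0 by auto
  next
    case False
    then have Ap: "A > 0" "B > 0" using A0 by auto
    define \<alpha> where "\<alpha> = A powr (1/p)"
    define \<beta> where "\<beta> = B powr (1/q)"
    have ab: "\<alpha> > 0" "\<beta> > 0" using Ap unfolding \<alpha>_def \<beta>_def by auto
    have ap: "\<alpha> powr p = A" using Ap pq unfolding \<alpha>_def by (simp add: powr_powr)
    have bq: "\<beta> powr q = B" using Ap pq unfolding \<beta>_def by (simp add: powr_powr)
    have pt: "(a x / \<alpha>) * (b x / \<beta>) \<le> a x powr p / (p * A) + b x powr q / (q * B)" for x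
    proof -
      have "(a x / \<alpha>) * (b x / \<beta>) \<le> (a x / \<alpha>) powr p / p + (b x / \<beta>) powr q / q"
        using Youngs_inequality[OF pq, of "a x / \<alpha>" "b x / \<beta>"] nn ab by auto
      also have "\<dots> = a x powr p / (p * A) + b x powr q / (q * B)"
        using nn ab by (simp add: powr_divide ap bq mult.commute)
      finally show ?thesis .
    qed
    have "(\<integral>x. (a x / \<alpha>) * (b x / \<beta>) \<partial>M) \<le> (\<integral>x. a x powr p / (p * A) + b x powr q / (q * B) \<partial>M)"
      using pt int ia ib by (intro integral_mono) auto
    also have "\<dots> = A / (p * A) + B / (q * B)"
      using ia ib unfolding A_def B_def by simp
    also have "\<dots> = 1" using Ap pq by simp
    finally have "(\<integral>x. a x * b x \<partial>M) / (\<alpha> * \<beta>) \<le> 1"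
      by (simp add: field_simps)
    then show ?thesis using ab unfolding \<alpha>_def[symmetric] \<beta>_def[symmetric] by (simp add: field_simps)
  qed
qed


definition wt :: "'a::euclidean_space \<Rightarrow> real" where "wt x = 1 + ln (1 + norm x)"

definition Pw :: "real \<Rightarrow> ('a::euclidean_space \<Rightarrow> real) \<Rightarrow> real" where
  "Pw p v = (\<integral>x. \<bar>v x\<bar> powr p * wt x \<partial>lborel)"

definition Yp :: "real \<Rightarrow> ('a::euclidean_space \<Rightarrow> real) \<Rightarrow> bool" where
  "Yp p v \<longleftrightarrow> v \<in> borel_measurable lborel \<and> integrable lborel (\<lambda>x. \<bar>v x\<bar> powr p * wt x)"

lemma wt_ge1: "wt x \<ge> 1"
  unfolding wt_def by simp

lemma wt_pos: "wt x > 0"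
  using wt_ge1[of x] by linarith

lemma wt_meas[measurable]: "wt \<in> borel_measurable borel"
  unfolding wt_def by measurable

lemma wt_cont: "continuous_on UNIV wt"
  unfolding wt_def by (intro continuous_intros) (smt (verit) norm_ge_zero)+

lemma Pw_nonneg: "Pw p v \<ge> 0"
  unfolding Pw_def by (auto intro!: integral_nonneg_AE simp: wt_pos less_imp_le)

lemma Xsp_Yp:
  assumes "v \<in> Xsp s p" "p > 0"
  shows "Yp p v" and "Pw p v powr (1/p) \<le> normX s p v"
proof -
  have vm[measurable]: "v \<in> borel_measurable lborel" using assms unfolding Xsp_def Wsp_def by auto
  have L: "Lp_pow p v < \<infinity>" and W: "log_pow p v < \<infinity>" and G: "gagliardo_pow s p v < \<infinity>"
    using assms unfolding Xsp_def Wsp_def by auto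
  have i1: "integrable lborel (\<lambda>x. \<bar>v x\<bar> powr p)"
    using L unfolding Lp_pow_def by (intro integrableI_bounded) auto
  have i2: "integrable lborel (\<lambda>x. ln (1 + norm x) * \<bar>v x\<bar> powr p)"
    using W unfolding log_pow_def by (intro integrableI_bounded) (auto simp: abs_mult)
  have eq: "(\<lambda>x. \<bar>v x\<bar> powr p * wt x) = (\<lambda>x. \<bar>v x\<bar> powr p + ln (1 + norm x) * \<bar>v x\<bar> powr p)"
    by (auto simp: wt_def algebra_simps)
  have iw: "integrable lborel (\<lambda>x. \<bar>v x\<bar> powr p * wt x)"
    unfolding eq using i1 i2 by auto
  then show "Yp p v" unfolding Yp_def by auto
  have "Lp_pow p v = ennreal (\<integral>x. \<bar>v x\<bar> powr p \<partial>lborel)"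
    unfolding Lp_pow_def using i1 by (intro nn_integral_eq_integral) auto
  moreover have "log_pow p v = ennreal (\<integral>x. ln (1 + norm x) * \<bar>v x\<bar> powr p \<partial>lborel)"
    unfolding log_pow_def using i2 by (intro nn_integral_eq_integral) auto
  moreover have "Pw p v = (\<integral>x. \<bar>v x\<bar> powr p \<partial>lborel) + (\<integral>x. ln (1 + norm x) * \<bar>v x\<bar> powr p \<partial>lborel)"
    unfolding Pw_def eq using i1 i2 by simp
  ultimately have PL: "ennreal (Pw p v) = Lp_pow p v + log_pow p v"
    by (simp add: ennreal_plus integral_nonneg_AE)
  have "Pw p v \<le> enn2real (gagliardo_pow s p v + Lp_pow p v + log_pow p v)"
  proof -
    have "Lp_pow p v + log_pow p v \<le> gagliardo_pow s p v + Lp_pow p v + log_pow p v"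
      by (simp add: add.assoc)
    moreover have "gagliardo_pow s p v + Lp_pow p v + log_pow p v < \<infinity>"
      using L W G by (simp add: ennreal_add_less_top)
    ultimately have "enn2real (Lp_pow p v + log_pow p v) \<le> enn2real (gagliardo_pow s p v + Lp_pow p v + log_pow p v)"
      by (intro enn2real_mono) auto
    moreover have "enn2real (Lp_pow p v + log_pow p v) = Pw p v"
      using PL[symmetric] Pw_nonneg[of p v] by simp
    ultimately show ?thesis by simp
  qed
  then show "Pw p v powr (1/p) \<le> normX s p v"
    unfolding normX_def using assms Pw_nonneg[of p v] by (intro powr_mono2) auto
qed

lemma holder_wt:
  fixes v \<xi> :: "'a::euclidean_space \<Rightarrow> real"
  assumes pq: "p > 1" "q > 1" "1/p + 1/q = 1"
    and Y: "Yp p v" and \<xi>m: "\<xi> \<in> borel_measurable lborel"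
    and i\<xi>: "integrable lborel (\<lambda>x. \<bar>\<xi> x\<bar> powr q * wt x)"
  shows "integrable lborel (\<lambda>x. \<xi> x * v x * wt x)"
    and "(\<integral>x. \<bar>\<xi> x * v x\<bar> * wt x \<partial>lborel) \<le> (\<integral>x. \<bar>\<xi> x\<bar> powr q * wt x \<partial>lborel) powr (1/q) * Pw p v powr (1/p)"
proof -
  have vm[measurable]: "v \<in> borel_measurable lborel" using Y unfolding Yp_def by auto
  note \<xi>m[measurable]
  define a where "a x = \<bar>v x\<bar> * wt x powr (1/p)" for x
  define b where "b x = \<bar>\<xi> x\<bar> * wt x powr (1/q)" for x
  have ap: "a x powr p = \<bar>v x\<bar> powr p * wt x" for x
    unfolding a_def using pq wt_pos[of x] by (simp add: powr_mult powr_powr)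
  have bq: "b x powr q = \<bar>\<xi> x\<bar> powr q * wt x" for x
    unfolding b_def using pq wt_pos[of x] by (simp add: powr_mult powr_powr)
  have ab: "a x * b x = \<bar>\<xi> x * v x\<bar> * wt x" for x
  proof -
    have "wt x powr (1/p) * wt x powr (1/q) = wt x"
      using pq wt_pos[of x] by (simp add: powr_add[symmetric])
    then show ?thesis unfolding a_def b_def by (simp add: abs_mult algebra_simps)
  qed
  have am: "a \<in> borel_measurable lborel" "b \<in> borel_measurable lborel"
    unfolding a_def b_def by measurable
  have H: "integrable lborel (\<lambda>x. a x * b x)"
       "(\<integral>x. a x * b x \<partial>lborel) \<le> (\<integral>x. a x powr p \<partial>lborel) powr (1/p) * (\<integral>x. b x powr q \<partial>lborel) powr (1/q)"
    using holder_real[OF pq, of a b lborel] Y i\<xi> am unfolding ap bq Yp_def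
    by (auto simp: a_def b_def)
  have "integrable lborel (\<lambda>x. \<bar>\<xi> x * v x\<bar> * wt x)" using H(1) unfolding ab .
  then show "integrable lborel (\<lambda>x. \<xi> x * v x * wt x)"
  proof (rule Bochner_Integration.integrable_bound)
    show "(\<lambda>x. \<xi> x * v x * wt x) \<in> borel_measurable lborel" by measurable
    show "AE x in lborel. norm (\<xi> x * v x * wt x) \<le> norm (\<bar>\<xi> x * v x\<bar> * wt x)"
      using wt_pos by (intro AE_I2) (simp add: abs_mult)
  qed
  show "(\<integral>x. \<bar>\<xi> x * v x\<bar> * wt x \<partial>lborel) \<le> (\<integral>x. \<bar>\<xi> x\<bar> powr q * wt x \<partial>lborel) powr (1/q) * Pw p v powr (1/p)"
    using H(2) unfolding ab ap bq Pw_def by (simp add: mult.commute)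
qed


lemma AE_summable_from_int:
  fixes f :: "nat \<Rightarrow> 'b \<Rightarrow> real"
  assumes int[measurable]: "\<And>i. integrable M (f i)"
    and sm: "summable (\<lambda>i. \<integral>x. norm (f i x) \<partial>M)"
  shows "AE x in M. summable (\<lambda>i. norm (f i x))"
proof -
  have [measurable]: "\<And>i. f i \<in> borel_measurable M" using int by auto
  have "(\<integral>\<^sup>+ x. (\<Sum>i. ennreal (norm (f i x))) \<partial>M) = (\<Sum>i. \<integral>\<^sup>+ x. ennreal (norm (f i x)) \<partial>M)"
    by (intro nn_integral_suminf) auto
  also have "\<dots> = (\<Sum>i. ennreal (\<integral>x. norm (f i x) \<partial>M))"
    by (intro arg_cong[where f=suminf] ext nn_integral_eq_integral integrable_norm int) auto
  also have "\<dots> \<noteq> \<infinity>"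
    using sm by (simp add: ennreal_suminf_neq_top)
  finally have "AE x in M. (\<Sum>i. ennreal (norm (f i x))) \<noteq> \<infinity>"
    by (intro nn_integral_PInf_AE) auto
  then show ?thesis
    by eventually_elim (auto intro: summable_suminf_not_top)
qed

lemma dual_intro:
  fixes G :: "('a::euclidean_space \<Rightarrow> real) \<Rightarrow> 'a \<Rightarrow> real"
  assumes lin: "\<And>(u::'a\<Rightarrow>real) v a b. u \<in> Xsp s p \<Longrightarrow> v \<in> Xsp s p \<Longrightarrow>
          AE x in lborel. G (\<lambda>x. a * u x + b * v x) x = a * G u x + b * G v x"
    and meas: "\<And>(u::'a\<Rightarrow>real) v a b. u \<in> Xsp s p \<Longrightarrow> v \<in> Xsp s p \<Longrightarrow>
          G (\<lambda>x. a * u x + b * v x) \<in> borel_measurable lborel"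
    and int: "\<And>(v::'a\<Rightarrow>real). v \<in> Xsp s p \<Longrightarrow> integrable lborel (G v)"
    and bnd: "\<And>(v::'a\<Rightarrow>real). v \<in> Xsp s p \<Longrightarrow> \<bar>\<integral>x. G v x \<partial>lborel\<bar> \<le> C * normX s p v"
  shows "(\<lambda>v. \<integral>x. G v x \<partial>lborel) \<in> dualX s p"
  unfolding dualX_def
proof (intro CollectI conjI ballI allI exI)
  fix u v :: "'a \<Rightarrow> real" and a b assume uv: "u \<in> Xsp s p" "v \<in> Xsp s p"
  have "(\<integral>x. G (\<lambda>x. a * u x + b * v x) x \<partial>lborel) = (\<integral>x. a * G u x + b * G v x \<partial>lborel)"
    using int[OF uv(1)] int[OF uv(2)] meas[OF uv] lin[OF uv]
    by (intro integral_cong_AE) auto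
  also have "\<dots> = a * (\<integral>x. G u x \<partial>lborel) + b * (\<integral>x. G v x \<partial>lborel)"
    using int[OF uv(1)] int[OF uv(2)] by simp
  finally show "(\<integral>x. G (\<lambda>x. a * u x + b * v x) x \<partial>lborel) = a * (\<integral>x. G u x \<partial>lborel) + b * (\<integral>x. G v x \<partial>lborel)" .
next
  fix v :: "'a \<Rightarrow> real" assume "v \<in> Xsp s p"
  then show "\<bar>\<integral>x. G v x \<partial>lborel\<bar> \<le> C * normX s p v" by (rule bnd)
qed

lemma phi_dual:
  fixes \<phi> :: "'a::euclidean_space \<Rightarrow> real"
  assumes pq: "p > 1" "q > 1" "1/p + 1/q = 1"
    and \<phi>m[measurable]: "\<phi> \<in> borel_measurable lborel"
    and i\<phi>: "integrable lborel (\<lambda>x. \<bar>\<phi> x / wt x\<bar> powr q * wt x)"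
  shows "\<And>v. Yp p v \<Longrightarrow> integrable lborel (\<lambda>x. \<phi> x * v x)"
    and "\<And>v. Yp p v \<Longrightarrow> (\<integral>x. \<bar>\<phi> x * v x\<bar> \<partial>lborel) \<le>
            (\<integral>x. \<bar>\<phi> x / wt x\<bar> powr q * wt x \<partial>lborel) powr (1/q) * Pw p v powr (1/p)"
    and "(\<lambda>v. \<integral>x. \<phi> x * v x \<partial>lborel) \<in> dualX s p"
proof -
  define K where "K = (\<integral>x. \<bar>\<phi> x / wt x\<bar> powr q * wt x \<partial>lborel) powr (1/q)"
  have eq: "\<phi> x / wt x * v x * wt x = \<phi> x * v x" for x v
    using wt_pos[of x] by simp
  have eq2: "\<bar>\<phi> x / wt x * v x\<bar> * wt x = \<bar>\<phi> x * v x\<bar>" for x v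
    using wt_pos[of x] by (simp add: abs_mult)
  show I: "integrable lborel (\<lambda>x. \<phi> x * v x)" if "Yp p v" for v :: "'a \<Rightarrow> real"
    using holder_wt(1)[OF pq that, of "\<lambda>x. \<phi> x / wt x"] i\<phi> unfolding eq by simp
  show B: "(\<integral>x. \<bar>\<phi> x * v x\<bar> \<partial>lborel) \<le> K * Pw p v powr (1/p)" if "Yp p v" for v :: "'a \<Rightarrow> real"
    using holder_wt(2)[OF pq that, of "\<lambda>x. \<phi> x / wt x"] i\<phi> unfolding eq2 K_def by simp
  have K0: "K \<ge> 0" unfolding K_def by simp
  show "(\<lambda>v. \<integral>x. \<phi> x * v x \<partial>lborel) \<in> dualX s p"
  proof (rule dual_intro[where C=K])
    fix u v :: "'a \<Rightarrow> real" and a b assume uv: "u \<in> Xsp s p" "v \<in> Xsp s p"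
    show "AE x in lborel. \<phi> x * (a * u x + b * v x) = a * (\<phi> x * u x) + b * (\<phi> x * v x)"
      by (intro AE_I2) (simp add: algebra_simps)
    have [measurable]: "u \<in> borel_measurable lborel" "v \<in> borel_measurable lborel"
      using uv unfolding Xsp_def Wsp_def by auto
    show "(\<lambda>x. \<phi> x * (a * u x + b * v x)) \<in> borel_measurable lborel" by measurable
  next
    fix v :: "'a \<Rightarrow> real" assume v: "v \<in> Xsp s p"
    have Y: "Yp p v" using Xsp_Yp[OF v] pq by auto
    show "integrable lborel (\<lambda>x. \<phi> x * v x)" by (rule I[OF Y])
    have "\<bar>\<integral>x. \<phi> x * v x \<partial>lborel\<bar> \<le> (\<integral>x. \<bar>\<phi> x * v x\<bar> \<partial>lborel)"
      by (rule integral_abs_bound)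
    also have "\<dots> \<le> K * Pw p v powr (1/p)" by (rule B[OF Y])
    also have "\<dots> \<le> K * normX s p v"
      using Xsp_Yp(2)[OF v] pq K0 by (intro mult_left_mono) auto
    finally show "\<bar>\<integral>x. \<phi> x * v x \<partial>lborel\<bar> \<le> K * normX s p v" .
  qed
qed

lemma weak_conv_apply:
  assumes "weak_convX s p U u" "f \<in> dualX s p"
  shows "(\<lambda>n. f (U n)) \<longlonglongrightarrow> f u"
  using assms unfolding weak_convX_def by auto


lemma wt_nn[simp]: "0 \<le> wt x" "0 < wt x" "wt x \<noteq> 0" "\<bar>wt x\<bar> = wt x"
  using wt_pos[of x] by auto

primrec gh :: "(nat \<Rightarrow> real \<Rightarrow> nat) \<Rightarrow> (nat \<Rightarrow> real) \<Rightarrow> nat \<Rightarrow> nat \<times> real" where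
  "gh pk bd 0 = (pk 0 0, 0)"
| "gh pk bd (Suc k) = (pk (Suc k) (snd (gh pk bd k) + bd (fst (gh pk bd k))),
                        snd (gh pk bd k) + bd (fst (gh pk bd k)))"

lemma gh_props:
  "snd (gh pk bd 0) = 0"
  "snd (gh pk bd (Suc k)) = snd (gh pk bd k) + bd (fst (gh pk bd k))"
  by auto

lemma gh_props2: "fst (gh pk bd k) = pk k (snd (gh pk bd k))"
  by (cases k) auto

lemma sgn_powr_abs: "\<bar>sgn t * \<bar>t\<bar> powr r\<bar> = \<bar>t::real\<bar> powr r"
  by (cases "t = 0") (auto simp: abs_mult)

lemma sgn_powr_mult: "r > 0 \<Longrightarrow> sgn t * \<bar>t\<bar> powr r * t = \<bar>t::real\<bar> powr (r + 1)"
proof (cases "t = 0")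
  case False
  assume r: "r > 0"
  have "sgn t * t = \<bar>t\<bar>" by (simp add: sgn_mult_self_eq abs_real_def sgn_real_def)
  then have "sgn t * \<bar>t\<bar> powr r * t = \<bar>t\<bar> powr r * \<bar>t\<bar> powr 1" using False
    by (simp add: algebra_simps)
  also have "\<dots> = \<bar>t\<bar> powr (r + 1)" by (simp add: powr_add)
  finally show ?thesis .
qed simp

lemma arith_aux: "3*(S+k+1) < CM \<Longrightarrow> X = A + Bs + CM \<Longrightarrow> -A \<le> CM/3 \<Longrightarrow> -Bs \<le> S \<Longrightarrow> 0 \<le> S \<Longrightarrow> 0 \<le> k \<Longrightarrow> (k::real) < X"
proof -
  assume a: "3*(S+k+1) < CM" "X = A + Bs + CM" "-A \<le> CM/3" "-Bs \<le> S" "0 \<le> S" "0 \<le> k"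
  have "3*S+3*k+3 < CM" using a(1) by (simp add: algebra_simps)
  then show ?thesis using a(2-6) by linarith
qed

lemma weak_bounded:
  fixes U :: "nat \<Rightarrow> 'a::euclidean_space \<Rightarrow> real"
  assumes p: "p > 1" and wc: "weak_convX s p U u"
  shows "\<exists>B. \<forall>n. Pw p (U n) \<le> B"
proof (rule ccontr)
  assume nb: "\<not> (\<exists>B. \<forall>n. Pw p (U n) \<le> B)"
  define q where "q = p / (p - 1)"
  have pq: "p > 1" "q > 1" "1/p + 1/q = 1" using p unfolding q_def by (auto simp: field_simps)
  have pq2: "(p - 1) * q = p" using p unfolding q_def by simp
  have UX: "\<And>n. U n \<in> Xsp s p" and uX: "u \<in> Xsp s p" using wc unfolding weak_convX_def by auto
  have Y: "\<And>n. Yp p (U n)" using Xsp_Yp(1)[OF UX] p by auto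
  have Um[measurable]: "\<And>n. U n \<in> borel_measurable lborel" using Y unfolding Yp_def by auto
  define M where "M m = Pw p (U m) powr (1/p)" for m
  define \<xi> where "\<xi> m x = sgn (U m x) * \<bar>U m x\<bar> powr (p-1) / M m powr (p-1)" for m x
  define \<psi> where "\<psi> m x = \<xi> m x * wt x" for m x
  have M0: "M m \<ge> 0" for m unfolding M_def by simp
  have MP: "M m powr p = Pw p (U m)" for m
    unfolding M_def using p Pw_nonneg[of p "U m"] by (simp add: powr_powr)
  have \<xi>m[measurable]: "\<xi> m \<in> borel_measurable lborel" for m unfolding \<xi>_def by measurable
  have \<psi>m[measurable]: "\<psi> m \<in> borel_measurable lborel" for m unfolding \<psi>_def by measurable
  have \<xi>q: "\<bar>\<psi> m x / wt x\<bar> powr q * wt x = \<bar>U m x\<bar> powr p * wt x / Pw p (U m)" for m x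
  proof -
    have "\<psi> m x / wt x = \<xi> m x" unfolding \<psi>_def using wt_pos[of x] by simp
    moreover have "\<bar>\<xi> m x\<bar> = \<bar>U m x\<bar> powr (p-1) / M m powr (p-1)"
      unfolding \<xi>_def using M0[of m] by (simp add: sgn_powr_abs)
    moreover have "(\<bar>U m x\<bar> powr (p-1) / M m powr (p-1)) powr q = \<bar>U m x\<bar> powr p / Pw p (U m)"
      using M0[of m] by (simp add: powr_divide powr_powr pq2 MP)
    ultimately show ?thesis by simp
  qed
  have \<xi>int: "integrable lborel (\<lambda>x. \<bar>\<psi> m x / wt x\<bar> powr q * wt x)" for m
    unfolding \<xi>q using Y[of m] unfolding Yp_def by simp
  have \<xi>le1: "(\<integral>x. \<bar>\<psi> m x / wt x\<bar> powr q * wt x \<partial>lborel) powr (1/q) \<le> 1" for m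
  proof -
    have "(\<integral>x. \<bar>\<psi> m x / wt x\<bar> powr q * wt x \<partial>lborel) = Pw p (U m) / Pw p (U m)"
      unfolding \<xi>q Pw_def by simp
    also have "\<dots> \<le> 1" by simp
    finally have "(\<integral>x. \<bar>\<psi> m x / wt x\<bar> powr q * wt x \<partial>lborel) powr (1/q) \<le> 1 powr (1/q)"
      using pq wt_pos by (intro powr_mono2) (auto intro!: integral_nonneg_AE AE_I2 mult_nonneg_nonneg simp: less_imp_le)
    then show ?thesis by simp
  qed
  have \<psi>int: "\<And>m v. Yp p v \<Longrightarrow> integrable lborel (\<lambda>x. \<psi> m x * v x)" using phi_dual(1)[OF pq \<psi>m \<xi>int] by blast
  have \<psi>bnd: "(\<integral>x. \<bar>\<psi> m x * v x\<bar> \<partial>lborel) \<le> Pw p v powr (1/p)" if "Yp p v" for m v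
  proof -
    have "(\<integral>x. \<bar>\<psi> m x * v x\<bar> \<partial>lborel) \<le>
      (\<integral>x. \<bar>\<psi> m x / wt x\<bar> powr q * wt x \<partial>lborel) powr (1/q) * Pw p v powr (1/p)"
      using phi_dual(2)[OF pq \<psi>m[of m] \<xi>int[of m] that] by blast
    also have "\<dots> \<le> 1 * Pw p v powr (1/p)"
      by (intro mult_right_mono \<xi>le1) auto
    finally show ?thesis by simp
  qed
  have \<psi>conv: "(\<lambda>n. \<integral>x. \<psi> m x * U n x \<partial>lborel) \<longlonglongrightarrow> (\<integral>x. \<psi> m x * u x \<partial>lborel)" for m
    using weak_conv_apply[OF wc phi_dual(3)[OF pq \<psi>m[of m] \<xi>int[of m], of s]] by simp
  have exK: "\<exists>K. K \<ge> 0 \<and> (\<forall>n. \<bar>\<integral>x. \<psi> m x * U n x \<partial>lborel\<bar> \<le> K)" for m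
  proof -
    obtain K where "K > 0" "\<And>n. norm (\<integral>x. \<psi> m x * U n x \<partial>lborel) \<le> K"
      using convergent_imp_Bseq[OF convergentI[OF \<psi>conv[of m]]] by (auto elim: BseqE)
    then show ?thesis by (intro exI[of _ K]) auto
  qed
  define Bd where "Bd m = (SOME K. K \<ge> 0 \<and> (\<forall>n. \<bar>\<integral>x. \<psi> m x * U n x \<partial>lborel\<bar> \<le> K))" for m
  have Bd: "Bd m \<ge> 0" "\<And>n. \<bar>\<integral>x. \<psi> m x * U n x \<partial>lborel\<bar> \<le> Bd m" for m
    using someI_ex[OF exK[of m]] unfolding Bd_def[symmetric] by auto
  have selfval: "(\<integral>x. \<psi> m x * U m x \<partial>lborel) = M m" for m
  proof -
    have "\<psi> m x * U m x = \<bar>U m x\<bar> powr p * wt x / M m powr (p-1)" for x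
      unfolding \<psi>_def \<xi>_def using sgn_powr_mult[of "p-1" "U m x"] p by (simp add: field_simps)
    then have "(\<integral>x. \<psi> m x * U m x \<partial>lborel) = Pw p (U m) / M m powr (p-1)"
      unfolding Pw_def by simp
    also have "\<dots> = M m"
    proof (cases "M m = 0")
      case True then show ?thesis by simp
    next
      case False
      then have "M m > 0" using M0[of m] by simp
      then have "M m powr p = M m powr (p-1) * M m" using powr_add[of "M m" "p-1" 1] by simp
      then show ?thesis using MP[of m] \<open>M m > 0\<close> by simp
    qed
    finally show ?thesis .
  qed
  have big: "\<exists>n. M n > K" for K
  proof -
    obtain n where n: "Pw p (U n) > (max K 0) powr p" using nb by (meson not_le)
    then have "Pw p (U n) powr (1/p) > ((max K 0) powr p) powr (1/p)"
      using p by (intro powr_less_mono2) auto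
    then have "M n > max K 0" unfolding M_def using p by (simp add: powr_powr)
    then show ?thesis by auto
  qed
  define pick where "pick k S = (SOME n. M n > 3 * 4^k * (S + real k + 1))" for k S
  have pick: "M (pick k S) > 3 * 4^k * (S + real k + 1)" for k S
    unfolding pick_def by (rule someI_ex) (rule big)
  define nk where "nk k = fst (gh pick Bd k)" for k
  define S where "S k = snd (gh pick Bd k)" for k
  have S0: "S 0 = 0" and SSuc: "S (Suc k) = S k + Bd (nk k)" and nkS: "nk k = pick k (S k)" for k
    unfolding S_def nk_def using gh_props gh_props2 by auto
  have Ssum: "S k = (\<Sum>j<k. Bd (nk j))" for k
    by (induction k) (auto simp: S0 SSuc)
  have Snn: "S k \<ge> 0" for k unfolding Ssum by (intro sum_nonneg) (simp add: Bd)
  have Mbig: "(1/4)^k * M (nk k) > 3 * (S k + real k + 1)" for k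
  proof -
    have "M (nk k) > 3 * 4^k * (S k + real k + 1)" unfolding nkS by (rule pick)
    then have "(1/4)^k * M (nk k) > (1/4)^k * (3 * 4^k * (S k + real k + 1))"
      by (intro mult_strict_left_mono) auto
    also have "(1/4)^k * (3 * 4^k * (S k + real k + 1)) = 3 * (S k + real k + 1) * ((1/4)^k * 4^k)"
      by (simp add: algebra_simps)
    also have "(1/4::real)^k * 4^k = 1" by (simp add: power_mult_distrib[symmetric])
    finally show ?thesis by simp
  qed

  define c where "c j = (1/4::real)^j" for j
  have c0: "c j \<ge> 0" "c j \<le> 1" for j unfolding c_def by (auto simp: power_le_one)
  have csum: "(\<lambda>j. c j) sums (4/3)" unfolding c_def using geometric_sums[of "1/4::real"] by simp
  define G where "G v x = (\<Sum>j. c j * (\<psi> (nk j) x * v x))" for v x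
  have term_int: "integrable lborel (\<lambda>x. c j * (\<psi> (nk j) x * v x))" if "Yp p v" for j v
    using \<psi>int[OF that] by simp
  have term_bnd: "(\<integral>x. norm (c j * (\<psi> (nk j) x * v x)) \<partial>lborel) \<le> c j * Pw p v powr (1/p)"
    if "Yp p v" for j v
  proof -
    have "(\<integral>x. norm (c j * (\<psi> (nk j) x * v x)) \<partial>lborel) = c j * (\<integral>x. \<bar>\<psi> (nk j) x * v x\<bar> \<partial>lborel)"
      using c0[of j] by (simp add: abs_mult)
    also have "\<dots> \<le> c j * Pw p v powr (1/p)"
      using \<psi>bnd[OF that] c0[of j] by (intro mult_left_mono) auto
    finally show ?thesis .
  qed
  have term_sum: "summable (\<lambda>j. \<integral>x. norm (c j * (\<psi> (nk j) x * v x)) \<partial>lborel)" if "Yp p v" for v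
  proof (rule summable_comparison_test')
    show "summable (\<lambda>j. c j * Pw p v powr (1/p))"
      using csum by (intro summable_mult2) (auto simp: sums_iff)
    fix j show "norm (\<integral>x. norm (c j * (\<psi> (nk j) x * v x)) \<partial>lborel) \<le> c j * Pw p v powr (1/p)"
      using term_bnd[OF that, of j] by (simp add: integral_nonneg_AE)
  qed
  have AEs: "AE x in lborel. summable (\<lambda>j. norm (c j * (\<psi> (nk j) x * v x)))" if "Yp p v" for v
    by (rule AE_summable_from_int[OF term_int[OF that] term_sum[OF that]])
  have Gint: "integrable lborel (G v)" if "Yp p v" for v
    unfolding G_def[abs_def] using integrable_suminf[OF term_int[OF that] AEs[OF that] term_sum[OF that]] .
  have Gval: "(\<integral>x. G v x \<partial>lborel) = (\<Sum>j. c j * (\<integral>x. \<psi> (nk j) x * v x \<partial>lborel))" if "Yp p v" for v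
    unfolding G_def using integral_suminf[OF term_int[OF that] AEs[OF that] term_sum[OF that]] by simp
  have Gbnd: "\<bar>\<integral>x. G v x \<partial>lborel\<bar> \<le> 4/3 * Pw p v powr (1/p)" if "Yp p v" for v
  proof -
    define a where "a j = (\<integral>x. \<psi> (nk j) x * v x \<partial>lborel)" for j
    have ab: "\<bar>a j\<bar> \<le> Pw p v powr (1/p)" for j
      unfolding a_def by (rule order_trans[OF integral_abs_bound \<psi>bnd[OF that]])
    have cab: "norm (c j * a j) \<le> c j * Pw p v powr (1/p)" for j
      using ab[of j] c0[of j] by (simp add: abs_mult mult_left_mono)
    have sm: "summable (\<lambda>j. c j * Pw p v powr (1/p))"
      using csum by (intro summable_mult2) (auto simp: sums_iff)
    have sn: "summable (\<lambda>j. norm (c j * a j))"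
      by (rule summable_comparison_test'[OF sm]) (use cab in auto)
    have "\<bar>\<Sum>j. c j * a j\<bar> \<le> (\<Sum>j. norm (c j * a j))"
      using summable_norm[OF sn] by simp
    also have "\<dots> \<le> (\<Sum>j. c j * Pw p v powr (1/p))"
      by (rule suminf_le[OF cab sn sm])
    also have "\<dots> = 4/3 * Pw p v powr (1/p)"
      using sums_mult2[OF csum, of "Pw p v powr (1/p)"] by (simp add: sums_iff)
    finally show ?thesis unfolding Gval[OF that] a_def .
  qed
  have Gdual: "(\<lambda>v. \<integral>x. G v x \<partial>lborel) \<in> dualX s p"
  proof (rule dual_intro[where C="4/3"])
    fix v :: "'a \<Rightarrow> real" and a b :: real and w :: "'a \<Rightarrow> real"
    assume uv: "v \<in> Xsp s p" "w \<in> Xsp s p"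
    have Yv: "Yp p v" "Yp p w" using Xsp_Yp(1)[OF uv(1)] Xsp_Yp(1)[OF uv(2)] p by auto
    have [measurable]: "v \<in> borel_measurable lborel" "w \<in> borel_measurable lborel"
      using Yv unfolding Yp_def by auto
    show "G (\<lambda>x. a * v x + b * w x) \<in> borel_measurable lborel"
      unfolding G_def[abs_def] by measurable
    show "AE x in lborel. G (\<lambda>x. a * v x + b * w x) x = a * G v x + b * G w x"
      using AEs[OF Yv(1)] AEs[OF Yv(2)]
    proof eventually_elim
      case (elim x)
      have s1: "summable (\<lambda>j. a * (c j * (\<psi> (nk j) x * v x)))"
        using summable_norm_cancel[OF elim(1)] by (rule summable_mult)
      have s2: "summable (\<lambda>j. b * (c j * (\<psi> (nk j) x * w x)))"
        using summable_norm_cancel[OF elim(2)] by (rule summable_mult)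
      have "G (\<lambda>x. a * v x + b * w x) x = (\<Sum>j. a * (c j * (\<psi> (nk j) x * v x)) + b * (c j * (\<psi> (nk j) x * w x)))"
        unfolding G_def by (simp add: algebra_simps)
      also have "\<dots> = (\<Sum>j. a * (c j * (\<psi> (nk j) x * v x))) + (\<Sum>j. b * (c j * (\<psi> (nk j) x * w x)))"
        by (rule suminf_add[OF s1 s2, symmetric])
      also have "\<dots> = a * G v x + b * G w x"
        unfolding G_def using summable_norm_cancel[OF elim(1)] summable_norm_cancel[OF elim(2)]
        by (simp add: suminf_mult)
      finally show ?case .
    qed
  next
    fix v :: "'a \<Rightarrow> real" assume v: "v \<in> Xsp s p"
    have Yv: "Yp p v" using Xsp_Yp(1)[OF v] p by auto
    show "integrable lborel (G v)" by (rule Gint[OF Yv])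
    have "\<bar>\<integral>x. G v x \<partial>lborel\<bar> \<le> 4/3 * Pw p v powr (1/p)" by (rule Gbnd[OF Yv])
    also have "\<dots> \<le> 4/3 * normX s p v" using Xsp_Yp(2)[OF v] p by simp
    finally show "\<bar>\<integral>x. G v x \<partial>lborel\<bar> \<le> 4/3 * normX s p v" .
  qed
  have Gconv: "(\<lambda>n. \<integral>x. G (U n) x \<partial>lborel) \<longlonglongrightarrow> (\<integral>x. G u x \<partial>lborel)"
    using weak_conv_apply[OF wc Gdual] by simp
  obtain K0 where K0: "\<And>n. \<bar>\<integral>x. G (U n) x \<partial>lborel\<bar> \<le> K0"
    using convergent_imp_Bseq[OF convergentI[OF Gconv]] by (metis BseqE real_norm_def)
  have lower: "\<bar>\<integral>x. G (U (nk k)) x \<partial>lborel\<bar> > real k" for k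
  proof -
    define a where "a j = (\<integral>x. \<psi> (nk j) x * U (nk k) x \<partial>lborel)" for j
    define Mk where "Mk = M (nk k)"
    have Mk: "Pw p (U (nk k)) powr (1/p) = Mk" unfolding Mk_def M_def ..
    have ak: "a k = Mk" unfolding a_def Mk_def by (rule selfval)
    have aB: "\<bar>a j\<bar> \<le> Bd (nk j)" for j unfolding a_def by (rule Bd(2))
    have aM: "\<bar>a j\<bar> \<le> Mk" for j
      unfolding a_def Mk[symmetric] by (rule order_trans[OF integral_abs_bound \<psi>bnd[OF Y[of "nk k"]]])
    have cab: "norm (c j * a j) \<le> c j * Mk" for j
      using aM[of j] c0[of j] by (simp add: abs_mult mult_left_mono)
    have sm: "summable (\<lambda>j. c j * Mk)"
      using csum by (intro summable_mult2) (auto simp: sums_iff)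
    have sn: "summable (\<lambda>j. norm (c j * a j))"
      by (rule summable_comparison_test'[OF sm]) (use cab in auto)
    have sca: "summable (\<lambda>j. c j * a j)" using summable_norm_cancel[OF sn] .
    have split: "(\<Sum>j. c j * a j) = (\<Sum>j. c (j + Suc k) * a (j + Suc k)) + (\<Sum>j<k. c j * a j) + c k * a k"
      using suminf_split_initial_segment[OF sca, of "Suc k"] by simp
    have t1: "\<bar>\<Sum>j. c (j + Suc k) * a (j + Suc k)\<bar> \<le> c k * Mk / 3"
    proof -
      have sn': "summable (\<lambda>j. norm (c (j + Suc k) * a (j + Suc k)))"
        using summable_ignore_initial_segment[OF sn] .
      have sm': "summable (\<lambda>j. c (j + Suc k) * Mk)"
        using summable_ignore_initial_segment[OF sm] .
      have "\<bar>\<Sum>j. c (j + Suc k) * a (j + Suc k)\<bar> \<le> (\<Sum>j. norm (c (j + Suc k) * a (j + Suc k)))"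
        using summable_norm[OF sn'] by simp
      also have "\<dots> \<le> (\<Sum>j. c (j + Suc k) * Mk)"
        by (rule suminf_le[OF _ sn' sm']) (rule cab)
      also have "(\<lambda>j. c (j + Suc k) * Mk) = (\<lambda>j. c j * (c (Suc k) * Mk))"
        unfolding c_def by (simp add: power_add mult.assoc)
      also have "(\<Sum>j. c j * (c (Suc k) * Mk)) = 4/3 * (c (Suc k) * Mk)"
        using sums_mult2[OF csum, of "c (Suc k) * Mk"] by (simp add: sums_iff)
      also have "\<dots> = c k * Mk / 3" unfolding c_def by simp
      finally show ?thesis .
    qed
    have t2: "\<bar>\<Sum>j<k. c j * a j\<bar> \<le> S k"
    proof -
      have "\<bar>\<Sum>j<k. c j * a j\<bar> \<le> (\<Sum>j<k. \<bar>c j * a j\<bar>)" by (rule sum_abs)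
      also have "\<dots> \<le> (\<Sum>j<k. Bd (nk j))"
      proof (rule sum_mono)
        fix j show "\<bar>c j * a j\<bar> \<le> Bd (nk j)"
          using aB[of j] c0[of j] by (simp add: abs_mult) (meson abs_ge_zero dual_order.trans mult_left_le_one_le)
      qed
      finally show ?thesis unfolding Ssum .
    qed
    have "c k * Mk > 3 * (S k + real k + 1)" using Mbig[of k] unfolding c_def Mk_def .
    moreover have "(\<integral>x. G (U (nk k)) x \<partial>lborel) = (\<Sum>j. c j * a j)"
      unfolding Gval[OF Y] a_def ..
    moreover have "c k * a k = c k * Mk" using ak by simp
    ultimately have "(\<integral>x. G (U (nk k)) x \<partial>lborel) > real k"
      using split abs_le_D2[OF t1] abs_le_D2[OF t2] Snn[of k] arith_aux[of "S k" "real k" "c k * Mk"] by simp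
    then show ?thesis by linarith
  qed
  show False using lower[of "nat (ceiling K0)"] K0[of "nk (nat (ceiling K0))"]
    by linarith
qed


lemma ln1p_diff_le: "(a::real) \<ge> 0 \<Longrightarrow> b \<ge> 0 \<Longrightarrow> ln (1 + a) - ln (1 + b) \<le> \<bar>a - b\<bar>"
proof -
  assume ab: "a \<ge> 0" "b \<ge> 0"
  have "ln (1 + a) - ln (1 + b) = ln ((1 + a) / (1 + b))" using ab by (simp add: ln_div)
  also have "\<dots> \<le> (1 + a) / (1 + b) - 1" using ab by (intro ln_le_minus_one) auto
  also have "\<dots> = (a - b) / (1 + b)" using ab by (simp add: field_simps)
  also have "\<dots> \<le> \<bar>a - b\<bar>"
  proof (cases "a \<ge> b")
    case True
    then show ?thesis using ab by (simp add: divide_le_eq) (smt (verit) mult_le_cancel_left1)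
  next
    case False
    then have "(a - b) / (1 + b) \<le> 0" using ab by (intro divide_nonpos_pos) auto
    then show ?thesis by simp
  qed
  finally show ?thesis .
qed

lemma ln_lip: "\<bar>ln (1 + norm (x - y)) - ln (1 + norm (x - y'))\<bar> \<le> norm (y - y')"
proof -
  have d: "\<bar>norm (x - y) - norm (x - y')\<bar> \<le> norm (y - y')"
    using norm_triangle_ineq3[of "x - y" "x - y'"] by (simp add: norm_minus_commute)
  have "ln (1 + norm (x - y)) - ln (1 + norm (x - y')) \<le> \<bar>norm (x - y) - norm (x - y')\<bar>"
    by (rule ln1p_diff_le) auto
  moreover have "ln (1 + norm (x - y')) - ln (1 + norm (x - y)) \<le> \<bar>norm (x - y') - norm (x - y)\<bar>"
    by (rule ln1p_diff_le) auto
  ultimately show ?thesis using d by (simp add: abs_minus_commute)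
qed

lemma ln_split: "ln (1 + norm (x - y)) \<le> ln (1 + norm x) + ln (1 + norm y)"
proof -
  have "1 + norm (x - y) \<le> (1 + norm x) * (1 + norm y)"
    using norm_triangle_ineq4[of x y] by (simp add: algebra_simps)
       (smt (verit) mult_nonneg_nonneg norm_ge_zero)
  then have "ln (1 + norm (x - y)) \<le> ln ((1 + norm x) * (1 + norm y))"
    by (intro ln_mono) (auto intro: add_pos_nonneg)
  also have "\<dots> = ln (1 + norm x) + ln (1 + norm y)"
    by (rule ln_mult_pos) (auto intro: add_pos_nonneg)
  finally show ?thesis .
qed

lemma ln1p_nonneg: "0 \<le> ln (1 + norm (x::'a::real_normed_vector))"
  by simp

lemma partition_ball:
  fixes R \<delta> :: real
  assumes "\<delta> > 0"
  shows "\<exists>m (c :: nat \<Rightarrow> 'a::euclidean_space) Q. (\<forall>i<m. Q i \<in> sets lborel) \<and>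
           (\<forall>y. (\<Sum>i<m. indicator (Q i) y) = (indicator (cball 0 R) y :: real)) \<and>
           (\<forall>i<m. \<forall>y\<in>Q i. dist y (c i) < \<delta>) \<and> (\<forall>i<m. Q i \<subseteq> cball 0 R)"
proof -
  have "seq_compact (cball (0::'a) R)" by (intro compact_imp_seq_compact compact_cball)
  from seq_compact_imp_totally_bounded[OF this, rule_format, OF assms]
  obtain k where k: "finite k" "k \<subseteq> cball 0 R" "cball (0::'a) R \<subseteq> (\<Union>x\<in>k. ball x \<delta>)" by (elim exE conjE) simp
  obtain xs where xs: "set xs = k" using finite_list[OF k(1)] by blast
  define m where "m = length xs"
  define c where "c i = xs ! i" for i
  define Q where "Q i = (cball 0 R \<inter> ball (c i) \<delta>) - (\<Union>j<i. ball (c j) \<delta>)" for i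
  have cov: "\<exists>i<m. y \<in> ball (c i) \<delta>" if "y \<in> cball 0 R" for y
  proof -
    from k(3) that obtain x where "x \<in> k" "y \<in> ball x \<delta>" by (auto simp del: mem_ball)
    then obtain i where "i < length xs" "xs ! i = x" using xs by (metis in_set_conv_nth)
    then show ?thesis using \<open>y \<in> ball x \<delta>\<close> unfolding m_def c_def by blast
  qed
  have ind: "(\<Sum>i<m. indicator (Q i) y) = (indicator (cball 0 R) y :: real)" for y
  proof (cases "y \<in> cball 0 R")
    case False
    then have "\<And>i. y \<notin> Q i" unfolding Q_def by auto
    then show ?thesis using False by (simp add: indicator_def)
  next
    case True
    define i0 where "i0 = (LEAST i. y \<in> ball (c i) \<delta>)"
    obtain i1 where i1: "i1 < m" "y \<in> ball (c i1) \<delta>" using cov[OF True] by blast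
    have i0b: "y \<in> ball (c i0) \<delta>" unfolding i0_def by (rule LeastI[of _ i1]) (rule i1(2))
    have i0m: "i0 < m" using Least_le[of "\<lambda>i. y \<in> ball (c i) \<delta>" i1] i1 unfolding i0_def by simp
    have i0l: "\<And>j. j < i0 \<Longrightarrow> y \<notin> ball (c j) \<delta>" unfolding i0_def by (rule not_less_Least)
    have "indicator (Q i) y = (if i = i0 then 1 else 0 :: real)" for i
    proof (cases "i = i0")
      case True
      then have "y \<in> Q i" using i0b i0l \<open>y \<in> cball 0 R\<close> unfolding Q_def by auto
      then show ?thesis using True by simp
    next
      case False
      have "y \<notin> Q i"
      proof (cases "i < i0")
        case True then show ?thesis using i0l unfolding Q_def by auto
      next
        case False
        then have "i0 < i" using \<open>i \<noteq> i0\<close> by simp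
        then show ?thesis using i0b unfolding Q_def by auto
      qed
      then show ?thesis using False by simp
    qed
    then have "(\<Sum>i<m. indicator (Q i) y) = (\<Sum>i<m. (if i = i0 then 1 else 0 :: real))" by simp
    also have "\<dots> = 1" using i0m by simp
    finally show ?thesis using True by simp
  qed
  show ?thesis
  proof (intro exI[of _ m] exI[of _ c] exI[of _ Q] conjI allI impI ballI)
    fix i assume "i < m" show "Q i \<in> sets lborel" unfolding Q_def by auto
  next
    fix y show "(\<Sum>i<m. indicator (Q i) y) = (indicator (cball 0 R) y :: real)" by (rule ind)
  next
    fix i y assume "i < m" "y \<in> Q i" then show "dist y (c i) < \<delta>" unfolding Q_def by (auto simp: dist_commute)
  next
    fix i assume "i < m" show "Q i \<subseteq> cball 0 R" unfolding Q_def by auto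
  qed
qed


lemma le_mult_wt: "0 \<le> a \<Longrightarrow> a \<le> a * wt x"
  by (metis mult.right_neutral mult_left_mono wt_ge1)

theorem lemma8:
  fixes s p :: real and U :: "nat \<Rightarrow> 'a::euclidean_space \<Rightarrow> real" and u :: "'a \<Rightarrow> real"
  assumes "0 < s" "s < 1" "p > 2" "real DIM('a) = s * p"
    and "weak_convX s p U u"
  shows "(\<forall>n. integrable (lborel \<Otimes>\<^sub>M lborel)
            (\<lambda>(x, y). ln (1 + norm (x - y)) * \<bar>U n x\<bar> powr p * \<bar>u y\<bar> powr (p - 2) * u y * (U n y - u y)))
    \<and> (\<lambda>n. \<integral>(x, y). ln (1 + norm (x - y)) * \<bar>U n x\<bar> powr p * \<bar>u y\<bar> powr (p - 2) * u y * (U n y - u y)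
              \<partial>(lborel \<Otimes>\<^sub>M lborel)) \<longlonglongrightarrow> 0"
proof -
  note wc = assms(5)
  have p1: "p > 1" using assms(3) by simp
  define q where "q = p / (p - 1)"
  have pq: "p > 1" "q > 1" "1/p + 1/q = 1" using p1 unfolding q_def by (auto simp: field_simps)
  have pq2: "(p - 1) * q = p" using p1 unfolding q_def by simp
  have UX: "\<And>n. U n \<in> Xsp s p" and uX: "u \<in> Xsp s p" using wc unfolding weak_convX_def by auto
  have Y: "\<And>n. Yp p (U n)" using Xsp_Yp(1)[OF UX] p1 by auto
  have Yu: "Yp p u" using Xsp_Yp(1)[OF uX] p1 by auto
  have Um[measurable]: "\<And>n. U n \<in> borel_measurable lborel" using Y unfolding Yp_def by auto
  have um[measurable]: "u \<in> borel_measurable lborel" using Yu unfolding Yp_def by auto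
  obtain B1 where B1: "\<And>n. Pw p (U n) \<le> B1" using weak_bounded[OF p1 wc] by blast
  define B0 where "B0 = max B1 1"
  have B0: "\<And>n. Pw p (U n) \<le> B0" "B0 \<ge> 1" unfolding B0_def using B1 by (auto intro: le_max_iff_disj[THEN iffD2])
  have iUw: "integrable lborel (\<lambda>x. \<bar>U n x\<bar> powr p * wt x)" for n using Y[of n] unfolding Yp_def by auto
  have iU1: "integrable lborel (\<lambda>x. \<bar>U n x\<bar> powr p)" for n
    by (rule Bochner_Integration.integrable_bound[OF iUw[of n]]) (auto intro!: AE_I2 le_mult_wt)
  have iU2: "integrable lborel (\<lambda>x. ln (1 + norm x) * \<bar>U n x\<bar> powr p)" for n
    by (rule Bochner_Integration.integrable_bound[OF iUw[of n]]) (auto intro!: AE_I2 simp: wt_def algebra_simps)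
  have Psplit: "Pw p (U n) = (\<integral>x. \<bar>U n x\<bar> powr p \<partial>lborel) + (\<integral>x. ln (1 + norm x) * \<bar>U n x\<bar> powr p \<partial>lborel)" for n
  proof -
    have "Pw p (U n) = (\<integral>x. \<bar>U n x\<bar> powr p + ln (1 + norm x) * \<bar>U n x\<bar> powr p \<partial>lborel)"
      unfolding Pw_def wt_def by (simp add: algebra_simps)
    then show ?thesis using iU1[of n] iU2[of n] by simp
  qed
  have I1: "(\<integral>x. \<bar>U n x\<bar> powr p \<partial>lborel) \<le> B0" and I2: "(\<integral>x. ln (1 + norm x) * \<bar>U n x\<bar> powr p \<partial>lborel) \<le> B0" for n
  proof -
    have a: "(\<integral>x. \<bar>U n x\<bar> powr p \<partial>lborel) \<ge> 0" by (auto intro!: integral_nonneg_AE)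
    have b: "(\<integral>x. ln (1 + norm x) * \<bar>U n x\<bar> powr p \<partial>lborel) \<ge> 0" by (auto intro!: integral_nonneg_AE)
    show "(\<integral>x. \<bar>U n x\<bar> powr p \<partial>lborel) \<le> B0" using a b Psplit[of n] B0(1)[of n] by linarith
    show "(\<integral>x. ln (1 + norm x) * \<bar>U n x\<bar> powr p \<partial>lborel) \<le> B0" using a b Psplit[of n] B0(1)[of n] by linarith
  qed

  define h where "h y = \<bar>u y\<bar> powr (p - 2) * u y" for y
  have hm[measurable]: "h \<in> borel_measurable lborel" unfolding h_def by measurable
  have habs: "\<bar>h y\<bar> = \<bar>u y\<bar> powr (p - 1)" for y
  proof (cases "u y = 0")
    case False
    have "\<bar>h y\<bar> = \<bar>u y\<bar> powr (p - 2) * \<bar>u y\<bar> powr 1" unfolding h_def using False by (simp add: abs_mult)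
    also have "\<dots> = \<bar>u y\<bar> powr (p - 2 + 1)" by (rule powr_add[symmetric])
    also have "\<dots> = \<bar>u y\<bar> powr (p - 1)" by simp
    finally show ?thesis .
  qed (simp add: h_def)
  have hq: "\<bar>h y\<bar> powr q * wt y = \<bar>u y\<bar> powr p * wt y" for y
    unfolding habs by (simp add: powr_powr pq2)
  have ih: "integrable lborel (\<lambda>y. \<bar>h y\<bar> powr q * wt y)"
    unfolding hq using Yu unfolding Yp_def by simp
  define Dh where "Dh = (\<integral>y. \<bar>h y\<bar> powr q * wt y \<partial>lborel) powr (1/q)"
  define Cu where "Cu = B0 powr (1/p) + Pw p u powr (1/p)"
  have Dh0: "Dh \<ge> 0" unfolding Dh_def by simp
  have Cu0: "Cu > 0" unfolding Cu_def using B0(2) by (simp add: add_pos_nonneg)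
  have PUp: "Pw p (U n) powr (1/p) \<le> B0 powr (1/p)" for n
    using B0(1)[of n] Pw_nonneg[of p "U n"] p1 by (intro powr_mono2) auto
  have GH: "integrable lborel (\<lambda>y. \<bar>\<xi> y * (U n y - u y)\<bar> * wt y) \<and>
            (\<integral>y. \<bar>\<xi> y * (U n y - u y)\<bar> * wt y \<partial>lborel) \<le> (\<integral>y. \<bar>\<xi> y\<bar> powr q * wt y \<partial>lborel) powr (1/q) * Cu"
    if \<xi>m: "\<xi> \<in> borel_measurable lborel" and i\<xi>: "integrable lborel (\<lambda>y. \<bar>\<xi> y\<bar> powr q * wt y)" for \<xi> n
  proof -
    note \<xi>m[measurable]
    define A where "A = (\<integral>y. \<bar>\<xi> y\<bar> powr q * wt y \<partial>lborel) powr (1/q)"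
    have A0: "A \<ge> 0" unfolding A_def by simp
    note HU = holder_wt[OF pq Y[of n] \<xi>m i\<xi>]
    note Hu = holder_wt[OF pq Yu \<xi>m i\<xi>]
    have a1: "integrable lborel (\<lambda>y. \<bar>\<xi> y * U n y\<bar> * wt y)"
      using integrable_abs[OF HU(1)] by (simp add: abs_mult)
    have a2: "integrable lborel (\<lambda>y. \<bar>\<xi> y * u y\<bar> * wt y)"
      using integrable_abs[OF Hu(1)] by (simp add: abs_mult)
    have pt: "\<bar>\<xi> y * (U n y - u y)\<bar> * wt y \<le> \<bar>\<xi> y * U n y\<bar> * wt y + \<bar>\<xi> y * u y\<bar> * wt y" for y
    proof -
      have "\<bar>\<xi> y * (U n y - u y)\<bar> \<le> \<bar>\<xi> y * U n y\<bar> + \<bar>\<xi> y * u y\<bar>"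
        by (simp add: right_diff_distrib abs_triangle_ineq4)
      then show ?thesis by (simp add: distrib_right[symmetric] mult_right_mono)
    qed
    have int: "integrable lborel (\<lambda>y. \<bar>\<xi> y * (U n y - u y)\<bar> * wt y)"
      by (rule Bochner_Integration.integrable_bound[OF Bochner_Integration.integrable_add[OF a1 a2]]) (auto intro!: AE_I2 pt)
    have "(\<integral>y. \<bar>\<xi> y * (U n y - u y)\<bar> * wt y \<partial>lborel) \<le> (\<integral>y. \<bar>\<xi> y * U n y\<bar> * wt y + \<bar>\<xi> y * u y\<bar> * wt y \<partial>lborel)"
      by (intro integral_mono int Bochner_Integration.integrable_add a1 a2 pt)
    also have "\<dots> = (\<integral>y. \<bar>\<xi> y * U n y\<bar> * wt y \<partial>lborel) + (\<integral>y. \<bar>\<xi> y * u y\<bar> * wt y \<partial>lborel)"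
      using a1 a2 by simp
    also have "\<dots> \<le> A * Pw p (U n) powr (1/p) + A * Pw p u powr (1/p)"
      using HU(2) Hu(2) unfolding A_def by linarith
    also have "\<dots> \<le> A * Cu"
      unfolding Cu_def using PUp[of n] A0 by (simp add: distrib_left mult_left_mono)
    finally show ?thesis using int unfolding A_def by simp
  qed
  define g where "g n y = h y * (U n y - u y)" for n y
  have gm[measurable]: "g n \<in> borel_measurable lborel" for n unfolding g_def by measurable
  have gwt: "integrable lborel (\<lambda>y. \<bar>g n y\<bar> * wt y)" "(\<integral>y. \<bar>g n y\<bar> * wt y \<partial>lborel) \<le> Dh * Cu" for n
    using GH[OF hm ih, of n] unfolding g_def Dh_def by auto
  have gabs: "integrable lborel (\<lambda>y. \<bar>g n y\<bar>)" "(\<integral>y. \<bar>g n y\<bar> \<partial>lborel) \<le> Dh * Cu" for n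
  proof -
    show i: "integrable lborel (\<lambda>y. \<bar>g n y\<bar>)"
      by (rule Bochner_Integration.integrable_bound[OF gwt(1)[of n]]) (auto intro!: AE_I2 le_mult_wt)
    have "(\<integral>y. \<bar>g n y\<bar> \<partial>lborel) \<le> (\<integral>y. \<bar>g n y\<bar> * wt y \<partial>lborel)"
      by (intro integral_mono i gwt(1) le_mult_wt) auto
    then show "(\<integral>y. \<bar>g n y\<bar> \<partial>lborel) \<le> Dh * Cu" using gwt(2)[of n] by linarith
  qed
  have gint: "integrable lborel (g n)" for n
    using gabs(1)[of n] by (simp add: integrable_abs_iff)
  define K where "K n y = (\<integral>x. ln (1 + norm (x - y)) * \<bar>U n x\<bar> powr p \<partial>lborel)" for n y
  have Kint: "integrable lborel (\<lambda>x. ln (1 + norm (x - y)) * \<bar>U n x\<bar> powr p)" for n y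
  proof (rule Bochner_Integration.integrable_bound)
    show "integrable lborel (\<lambda>x. ln (1 + norm x) * \<bar>U n x\<bar> powr p + ln (1 + norm y) * \<bar>U n x\<bar> powr p)"
      using iU1[of n] iU2[of n] by auto
    show "(\<lambda>x. ln (1 + norm (x - y)) * \<bar>U n x\<bar> powr p) \<in> borel_measurable lborel" by measurable
    show "AE x in lborel. norm (ln (1 + norm (x - y)) * \<bar>U n x\<bar> powr p) \<le>
           norm (ln (1 + norm x) * \<bar>U n x\<bar> powr p + ln (1 + norm y) * \<bar>U n x\<bar> powr p)"
    proof (intro AE_I2)
      fix x
      have "ln (1 + norm (x - y)) * \<bar>U n x\<bar> powr p \<le> (ln (1 + norm x) + ln (1 + norm y)) * \<bar>U n x\<bar> powr p"
        by (intro mult_right_mono ln_split) auto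
      then show "norm (ln (1 + norm (x - y)) * \<bar>U n x\<bar> powr p) \<le>
           norm (ln (1 + norm x) * \<bar>U n x\<bar> powr p + ln (1 + norm y) * \<bar>U n x\<bar> powr p)"
        by (simp add: distrib_right)
    qed
  qed
  have K0: "K n y \<ge> 0" for n y unfolding K_def by (auto intro!: integral_nonneg_AE)
  have Kbnd: "K n y \<le> B0 * wt y" for n y
  proof -
    have "K n y \<le> (\<integral>x. ln (1 + norm x) * \<bar>U n x\<bar> powr p + ln (1 + norm y) * \<bar>U n x\<bar> powr p \<partial>lborel)"
      unfolding K_def
      by (intro integral_mono Kint Bochner_Integration.integrable_add iU2 integrable_mult_right iU1)
         (use ln_split in \<open>auto simp: distrib_right[symmetric] intro!: mult_right_mono\<close>)
    also have "\<dots> = (\<integral>x. ln (1 + norm x) * \<bar>U n x\<bar> powr p \<partial>lborel) + ln (1 + norm y) * (\<integral>x. \<bar>U n x\<bar> powr p \<partial>lborel)"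
      using iU1[of n] iU2[of n] by simp
    also have "\<dots> \<le> B0 + ln (1 + norm y) * B0"
      using I1[of n] I2[of n] by (intro add_mono mult_left_mono) auto
    also have "\<dots> = B0 * wt y" unfolding wt_def by (simp add: algebra_simps)
    finally show ?thesis .
  qed
  have Klip: "\<bar>K n y - K n y'\<bar> \<le> B0 * dist y y'" for n y y'
  proof -
    have "\<bar>K n y - K n y'\<bar> = \<bar>\<integral>x. (ln (1 + norm (x - y)) - ln (1 + norm (x - y'))) * \<bar>U n x\<bar> powr p \<partial>lborel\<bar>"
      unfolding K_def using Kint[of y n] Kint[of y' n] by (simp add: left_diff_distrib)
    also have "\<dots> \<le> (\<integral>x. \<bar>(ln (1 + norm (x - y)) - ln (1 + norm (x - y'))) * \<bar>U n x\<bar> powr p\<bar> \<partial>lborel)"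
      by (rule integral_abs_bound)
    also have "\<dots> \<le> (\<integral>x. dist y y' * \<bar>U n x\<bar> powr p \<partial>lborel)"
    proof (intro integral_mono)
      show "integrable lborel (\<lambda>x. \<bar>(ln (1 + norm (x - y)) - ln (1 + norm (x - y'))) * \<bar>U n x\<bar> powr p\<bar>)"
        using Kint[of y n] Kint[of y' n] by (intro integrable_abs) (simp add: left_diff_distrib)
      show "integrable lborel (\<lambda>x. dist y y' * \<bar>U n x\<bar> powr p)" using iU1[of n] by simp
      fix x show "\<bar>(ln (1 + norm (x - y)) - ln (1 + norm (x - y'))) * \<bar>U n x\<bar> powr p\<bar> \<le> dist y y' * \<bar>U n x\<bar> powr p"
        using ln_lip[of x y y'] by (simp add: abs_mult dist_norm mult_right_mono)
    qed
    also have "\<dots> = dist y y' * (\<integral>x. \<bar>U n x\<bar> powr p \<partial>lborel)" by simp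
    also have "\<dots> \<le> dist y y' * B0" using I1[of n] by (intro mult_left_mono) auto
    finally show ?thesis by (simp add: mult.commute)
  qed
  have Kcont: "continuous_on UNIV (K n)" for n
  proof (rule lipschitz_on_continuous_on)
    show "B0-lipschitz_on UNIV (K n)"
      by (rule lipschitz_onI) (use Klip B0(2) in \<open>auto simp: dist_real_def\<close>)
  qed
  have Km[measurable]: "K n \<in> borel_measurable lborel" for n
    using borel_measurable_continuous_onI[OF Kcont[of n]] by simp
  define F where "F n x y = ln (1 + norm (x - y)) * \<bar>U n x\<bar> powr p * \<bar>u y\<bar> powr (p - 2) * u y * (U n y - u y)" for n x y
  have Feq: "F n x y = (ln (1 + norm (x - y)) * \<bar>U n x\<bar> powr p) * g n y" for n x y
    unfolding F_def g_def h_def by (simp add: mult.assoc)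
  have Fm[measurable]: "(\<lambda>(x, y). F n x y) \<in> borel_measurable (lborel \<Otimes>\<^sub>M lborel)" for n
    unfolding F_def by measurable
  have Fint: "integrable (lborel \<Otimes>\<^sub>M lborel) (\<lambda>(x, y). F n x y)" for n
  proof (rule integrableI_bounded)
    show "(\<lambda>(x, y). F n x y) \<in> borel_measurable (lborel \<Otimes>\<^sub>M lborel)" by (rule Fm)
    have "(\<integral>\<^sup>+ z. ennreal (norm ((\<lambda>(x, y). F n x y) z)) \<partial>(lborel \<Otimes>\<^sub>M lborel)) =
          (\<integral>\<^sup>+ y. \<integral>\<^sup>+ x. ennreal (norm (F n x y)) \<partial>lborel \<partial>lborel)"
      by (subst lborel_pair.nn_integral_snd[symmetric]) (auto simp: case_prod_beta')
    also have "\<dots> \<le> (\<integral>\<^sup>+ y. ennreal (B0 * (\<bar>g n y\<bar> * wt y)) \<partial>lborel)"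
    proof (intro nn_integral_mono)
      fix y :: 'a
      have "(\<integral>\<^sup>+ x. ennreal (norm (F n x y)) \<partial>lborel) = (\<integral>\<^sup>+ x. ennreal \<bar>g n y\<bar> * ennreal (ln (1 + norm (x - y)) * \<bar>U n x\<bar> powr p) \<partial>lborel)"
        unfolding Feq by (intro nn_integral_cong) (simp add: abs_mult ennreal_mult'[symmetric] mult.commute)
      also have "\<dots> = ennreal \<bar>g n y\<bar> * (\<integral>\<^sup>+ x. ennreal (ln (1 + norm (x - y)) * \<bar>U n x\<bar> powr p) \<partial>lborel)"
        by (rule nn_integral_cmult) measurable
      also have "(\<integral>\<^sup>+ x. ennreal (ln (1 + norm (x - y)) * \<bar>U n x\<bar> powr p) \<partial>lborel) = ennreal (K n y)"
        unfolding K_def by (intro nn_integral_eq_integral Kint) auto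
      also have "ennreal \<bar>g n y\<bar> * ennreal (K n y) = ennreal (\<bar>g n y\<bar> * K n y)"
        by (rule ennreal_mult[symmetric]) (auto simp: K0)
      also have "\<dots> \<le> ennreal (B0 * (\<bar>g n y\<bar> * wt y))"
        using mult_right_mono[OF Kbnd[of n y], of "\<bar>g n y\<bar>"] by (intro ennreal_leI) (simp add: algebra_simps)
      finally show "(\<integral>\<^sup>+ x. ennreal (norm (F n x y)) \<partial>lborel) \<le> ennreal (B0 * (\<bar>g n y\<bar> * wt y))" .
    qed
    also have "\<dots> = ennreal (\<integral>y. B0 * (\<bar>g n y\<bar> * wt y) \<partial>lborel)"
      using gwt(1)[of n] B0(2) by (intro nn_integral_eq_integral) auto
    also have "\<dots> < \<infinity>" by simp
    finally show "(\<integral>\<^sup>+ z. ennreal (norm ((\<lambda>(x, y). F n x y) z)) \<partial>(lborel \<Otimes>\<^sub>M lborel)) < \<infinity>" .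
  qed
  have Fiter: "(\<integral>z. (\<lambda>(x, y). F n x y) z \<partial>(lborel \<Otimes>\<^sub>M lborel)) = (\<integral>y. K n y * g n y \<partial>lborel)" for n
  proof -
    have "(\<integral>z. (\<lambda>(x, y). F n x y) z \<partial>(lborel \<Otimes>\<^sub>M lborel)) = (\<integral>y. (\<integral>x. F n x y \<partial>lborel) \<partial>lborel)"
      using lborel_pair.integral_snd[OF Fint[of n]] by simp
    also have "\<dots> = (\<integral>y. K n y * g n y \<partial>lborel)"
      unfolding Feq K_def by simp
    finally show ?thesis .
  qed
  have KGint: "integrable lborel (\<lambda>y. K n y * g n y)" for n
  proof (rule Bochner_Integration.integrable_bound)
    show "integrable lborel (\<lambda>y. B0 * (\<bar>g n y\<bar> * wt y))" using gwt(1)[of n] by simp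
    show "(\<lambda>y. K n y * g n y) \<in> borel_measurable lborel" by measurable
    show "AE y in lborel. norm (K n y * g n y) \<le> norm (B0 * (\<bar>g n y\<bar> * wt y))"
      using Kbnd K0 B0(2) by (intro AE_I2) (simp add: abs_mult algebra_simps mult_right_mono[OF Kbnd, of "\<bar>g n y\<bar>" n y for y, simplified mult.assoc])
  qed
  define T where "T m = (\<integral>y. \<bar>u y\<bar> powr p * wt y * indicator {y. real m < norm y} y \<partial>lborel)" for m :: nat
  have T0: "T m \<ge> 0" for m unfolding T_def by (auto intro!: integral_nonneg_AE)
  have Tlim: "T \<longlonglongrightarrow> 0"
  proof -
    have "(\<lambda>m. \<integral>y. \<bar>u y\<bar> powr p * wt y * indicator {y. real m < norm y} y \<partial>lborel) \<longlonglongrightarrow> (\<integral>y. 0 \<partial>(lborel::'a measure))"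
    proof (rule integral_dominated_convergence[where w="\<lambda>y. \<bar>u y\<bar> powr p * wt y" and f="\<lambda>y. 0"
        and s="\<lambda>m y. \<bar>u y\<bar> powr p * wt y * indicator {y. real m < norm y} y"])
      show "integrable lborel (\<lambda>y. \<bar>u y\<bar> powr p * wt y)" using Yu unfolding Yp_def by simp
      show "(\<lambda>y. 0::real) \<in> borel_measurable lborel" by simp
      fix m :: nat
      show "(\<lambda>y. \<bar>u y\<bar> powr p * wt y * indicator {y. real m < norm y} y) \<in> borel_measurable lborel" by measurable
      show "AE y in lborel. norm (\<bar>u y\<bar> powr p * wt y * indicator {y. real m < norm y} y) \<le> \<bar>u y\<bar> powr p * wt y"
        by (intro AE_I2) (auto simp: indicator_def)
    next
      show "AE y in lborel. (\<lambda>m. \<bar>u y\<bar> powr p * wt y * indicator {y. real m < norm y} y) \<longlonglongrightarrow> 0"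
      proof (intro AE_I2)
        fix y :: 'a
        obtain N :: nat where "norm y < real N" using reals_Archimedean2 by blast
        then have "eventually (\<lambda>m. \<bar>u y\<bar> powr p * wt y * indicator {y. real m < norm y} y = 0) sequentially"
          unfolding eventually_sequentially
          by (intro exI[of _ N]) (auto simp: indicator_def)
        then show "(\<lambda>m. \<bar>u y\<bar> powr p * wt y * indicator {y. real m < norm y} y) \<longlonglongrightarrow> 0"
          by (rule tendsto_eventually)
      qed
    qed
    then show ?thesis unfolding T_def by simp
  qed
  have Tq: "(\<lambda>m. T m powr (1/q)) \<longlonglongrightarrow> 0"
    by (rule tendsto_zero_powrI[OF Tlim tendsto_const]) (use T0 pq in auto)
  have tail: "integrable lborel (\<lambda>y. \<bar>g n y\<bar> * wt y * indicator {y. real m < norm y} y) \<and>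
              (\<integral>y. \<bar>g n y\<bar> * wt y * indicator {y. real m < norm y} y \<partial>lborel) \<le> T m powr (1/q) * Cu" for n m
  proof -
    define \<xi> where "\<xi> y = h y * indicator {y. real m < norm y} y" for y
    have \<xi>m: "\<xi> \<in> borel_measurable lborel" unfolding \<xi>_def by measurable
    have \<xi>q: "\<bar>\<xi> y\<bar> powr q * wt y = \<bar>u y\<bar> powr p * wt y * indicator {y. real m < norm y} y" for y
      unfolding \<xi>_def using hq[of y] by (auto simp: indicator_def)
    have i\<xi>: "integrable lborel (\<lambda>y. \<bar>\<xi> y\<bar> powr q * wt y)"
      unfolding \<xi>q
    proof (rule Bochner_Integration.integrable_bound)
      show "integrable lborel (\<lambda>y. \<bar>u y\<bar> powr p * wt y)" using Yu unfolding Yp_def by simp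
      show "(\<lambda>y. \<bar>u y\<bar> powr p * wt y * indicator {y. real m < norm y} y) \<in> borel_measurable lborel" by measurable
      show "AE y in lborel. norm (\<bar>u y\<bar> powr p * wt y * indicator {y. real m < norm y} y) \<le> norm (\<bar>u y\<bar> powr p * wt y)"
        by (intro AE_I2) (auto simp: indicator_def)
    qed
    have eq: "\<bar>\<xi> y * (U n y - u y)\<bar> * wt y = \<bar>g n y\<bar> * wt y * indicator {y. real m < norm y} y" for y
      unfolding \<xi>_def g_def by (auto simp: indicator_def)
    show ?thesis using GH[OF \<xi>m i\<xi>, of n] unfolding eq \<xi>q T_def by simp
  qed
  have mainlim: "(\<lambda>n. \<integral>y. K n y * g n y \<partial>lborel) \<longlonglongrightarrow> 0"
  proof (rule LIMSEQ_I)
    fix e :: real assume e: "e > 0"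
    have e3: "e / (3 * (B0 * Cu)) > 0" using e B0(2) Cu0 by simp
    obtain R :: nat where R: "T R powr (1/q) < e / (3 * (B0 * Cu))"
      using order_tendstoD(2)[OF Tq e3] unfolding eventually_sequentially by auto
    have Rb: "B0 * (T R powr (1/q) * Cu) < e / 3"
    proof -
      have "B0 * (T R powr (1/q) * Cu) = (T R powr (1/q)) * (B0 * Cu)" by simp
      also have "\<dots> < e / (3 * (B0 * Cu)) * (B0 * Cu)"
        using R B0(2) Cu0 by (intro mult_strict_right_mono) auto
      also have "\<dots> = e / 3" using B0(2) Cu0 by simp
      finally show ?thesis .
    qed
    define \<delta> where "\<delta> = e / (3 * (B0 * Dh * Cu + 1))"
    have DC0: "B0 * Dh * Cu \<ge> 0" using B0(2) Dh0 Cu0 by simp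
    have \<delta>0: "\<delta> > 0" unfolding \<delta>_def using e DC0 by (simp add: add_nonneg_pos)
    have \<delta>b: "B0 * \<delta> * (Dh * Cu) < e / 3"
    proof -
      have "B0 * \<delta> * (Dh * Cu) = e / 3 * ((B0 * Dh * Cu) / (B0 * Dh * Cu + 1))"
        unfolding \<delta>_def using DC0 by (simp add: field_simps)
      also have "\<dots> < e / 3 * 1"
        using e DC0 by (intro mult_strict_left_mono) auto
      finally show ?thesis by simp
    qed
    obtain m and c :: "nat \<Rightarrow> 'a" and Q where
      Qm: "\<And>i. i < m \<Longrightarrow> Q i \<in> sets lborel" and
      Qsum: "\<And>y. (\<Sum>i<m. indicator (Q i) y) = (indicator (cball 0 (real R)) y :: real)" and
      Qd: "\<And>i y. i < m \<Longrightarrow> y \<in> Q i \<Longrightarrow> dist y (c i) < \<delta>" and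
      Qs: "\<And>i. i < m \<Longrightarrow> Q i \<subseteq> cball 0 (real R)"
      using partition_ball[OF \<delta>0, of "real R"] by metis
    define a where "a n i = (\<integral>y. indicator (Q i) y * g n y \<partial>lborel)" for n i
    have Qgint: "integrable lborel (\<lambda>y. indicator (Q i) y * g n y)" if "i < m" for i n
    proof (rule Bochner_Integration.integrable_bound[OF gabs(1)[of n]])
      have [measurable]: "Q i \<in> sets lborel" using Qm[OF that] .
      show "(\<lambda>y. indicator (Q i) y * g n y) \<in> borel_measurable lborel" by measurable
      show "AE y in lborel. norm (indicator (Q i) y * g n y) \<le> norm \<bar>g n y\<bar>"
        by (intro AE_I2) (auto simp: indicator_def)
    qed
    have aconv: "(\<lambda>n. a n i) \<longlonglongrightarrow> 0" if im: "i < m" for i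
    proof -
      have [measurable]: "Q i \<in> sets lborel" using Qm[OF im] .
      define \<phi> where "\<phi> y = h y * indicator (Q i) y" for y
      have \<phi>m: "\<phi> \<in> borel_measurable lborel" unfolding \<phi>_def by measurable
      have i\<phi>: "integrable lborel (\<lambda>y. \<bar>\<phi> y / wt y\<bar> powr q * wt y)"
      proof (rule Bochner_Integration.integrable_bound[OF ih])
        show "(\<lambda>y. \<bar>\<phi> y / wt y\<bar> powr q * wt y) \<in> borel_measurable lborel" using \<phi>m by measurable
        show "AE y in lborel. norm (\<bar>\<phi> y / wt y\<bar> powr q * wt y) \<le> norm (\<bar>h y\<bar> powr q * wt y)"
        proof (intro AE_I2)
          fix y
          have "\<bar>\<phi> y / wt y\<bar> \<le> \<bar>h y\<bar>"
          proof -
            have "\<bar>\<phi> y\<bar> \<le> \<bar>h y\<bar>" unfolding \<phi>_def by (auto simp: indicator_def)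
            also have "\<dots> \<le> \<bar>h y\<bar> * wt y" by (rule le_mult_wt) simp
            finally show ?thesis by (simp add: divide_le_eq)
          qed
          then have "\<bar>\<phi> y / wt y\<bar> powr q \<le> \<bar>h y\<bar> powr q" using pq by (intro powr_mono2) auto
          then show "norm (\<bar>\<phi> y / wt y\<bar> powr q * wt y) \<le> norm (\<bar>h y\<bar> powr q * wt y)"
            by (simp add: mult_right_mono)
        qed
      qed
      note PD = phi_dual[OF pq \<phi>m i\<phi>]
      have conv: "(\<lambda>n. \<integral>y. \<phi> y * U n y \<partial>lborel) \<longlonglongrightarrow> (\<integral>y. \<phi> y * u y \<partial>lborel)"
        using weak_conv_apply[OF wc PD(3)[of s]] by simp
      have aeq: "a n i = (\<integral>y. \<phi> y * U n y \<partial>lborel) - (\<integral>y. \<phi> y * u y \<partial>lborel)" for n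
      proof -
        have "a n i = (\<integral>y. \<phi> y * U n y - \<phi> y * u y \<partial>lborel)"
          unfolding a_def \<phi>_def g_def by (intro Bochner_Integration.integral_cong refl) (simp add: algebra_simps)
        also have "\<dots> = (\<integral>y. \<phi> y * U n y \<partial>lborel) - (\<integral>y. \<phi> y * u y \<partial>lborel)"
          using PD(1)[OF Y[of n]] PD(1)[OF Yu] by simp
        finally show ?thesis .
      qed
      show ?thesis unfolding aeq using tendsto_diff[OF conv tendsto_const, of "\<integral>y. \<phi> y * u y \<partial>lborel"] by simp
    qed
    have sconv: "(\<lambda>n. \<Sum>i<m. K n (c i) * a n i) \<longlonglongrightarrow> 0"
    proof (rule tendsto_null_sum)
      fix i assume "i \<in> {..<m}"
      then have im: "i < m" by simp
      show "(\<lambda>n. K n (c i) * a n i) \<longlonglongrightarrow> 0"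
      proof (rule Lim_null_comparison)
        show "eventually (\<lambda>n. norm (K n (c i) * a n i) \<le> B0 * wt (c i) * \<bar>a n i\<bar>) sequentially"
          using Kbnd K0 by (intro always_eventually allI) (simp add: abs_mult mult_right_mono)
        show "(\<lambda>n. B0 * wt (c i) * \<bar>a n i\<bar>) \<longlonglongrightarrow> 0"
          using tendsto_mult_left[OF tendsto_rabs_zero[OF aconv[OF im]], of "B0 * wt (c i)"] by simp
      qed
    qed
    obtain N1 where N1: "\<And>n. n \<ge> N1 \<Longrightarrow> \<bar>\<Sum>i<m. K n (c i) * a n i\<bar> < e / 3"
      using LIMSEQ_D[OF sconv, of "e/3"] e by auto
    show "\<exists>no. \<forall>n\<ge>no. norm ((\<integral>y. K n y * g n y \<partial>lborel) - 0) < e"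
    proof (intro exI allI impI)
      fix n assume n: "n \<ge> N1"
      define E where "E y = K n y - (\<Sum>i<m. K n (c i) * indicator (Q i) y)" for y
      have Em: "E \<in> borel_measurable lborel"
      proof -
        have [measurable]: "\<And>i. i \<in> {..<m} \<Longrightarrow> Q i \<in> sets lborel" using Qm by auto
        show ?thesis unfolding E_def by measurable
      qed
      have Ebnd: "\<bar>E y\<bar> \<le> B0 * \<delta> + B0 * wt y * indicator {y. real R < norm y} y" for y
      proof (cases "y \<in> cball 0 (real R)")
        case True
        have s1: "(\<Sum>i<m. indicator (Q i) y) = (1::real)" using Qsum[of y] True by simp
        have "E y = K n y * (\<Sum>i<m. indicator (Q i) y) - (\<Sum>i<m. K n (c i) * indicator (Q i) y)"
          unfolding E_def s1 by simp
        also have "\<dots> = (\<Sum>i<m. (K n y - K n (c i)) * indicator (Q i) y)"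
          by (simp add: sum_distrib_left sum_subtractf left_diff_distrib)
        finally have Ee: "E y = (\<Sum>i<m. (K n y - K n (c i)) * indicator (Q i) y)" .
        have "\<bar>E y\<bar> \<le> (\<Sum>i<m. \<bar>(K n y - K n (c i)) * indicator (Q i) y\<bar>)"
          unfolding Ee by (rule sum_abs)
        also have "\<dots> \<le> (\<Sum>i<m. B0 * \<delta> * indicator (Q i) y)"
        proof (rule sum_mono)
          fix i assume "i \<in> {..<m}"
          then have im: "i < m" by simp
          show "\<bar>(K n y - K n (c i)) * indicator (Q i) y\<bar> \<le> B0 * \<delta> * indicator (Q i) y"
          proof (cases "y \<in> Q i")
            case True
            have "\<bar>K n y - K n (c i)\<bar> \<le> B0 * dist y (c i)" by (rule Klip)
            also have "\<dots> \<le> B0 * \<delta>" using Qd[OF im True] B0(2) by (intro mult_left_mono) auto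
            finally show ?thesis using True by simp
          qed simp
        qed
        also have "\<dots> = B0 * \<delta>" by (simp add: sum_distrib_left[symmetric] s1)
        finally have "\<bar>E y\<bar> \<le> B0 * \<delta>" .
        moreover have "0 \<le> B0 * wt y * indicator {y. real R < norm y} y" using B0(2) by simp
        ultimately show ?thesis by linarith
      next
        case False
        have "\<And>i. i < m \<Longrightarrow> y \<notin> Q i" using Qs False by blast
        then have "E y = K n y" unfolding E_def by simp
        moreover have "real R < norm y" using False by simp
        moreover have "0 \<le> B0 * \<delta>" using B0(2) \<delta>0 by simp
        ultimately show ?thesis using Kbnd[of n y] K0[of n y] by (simp add: indicator_def)
      qed
      have Eeq: "(\<lambda>y. E y * g n y) = (\<lambda>y. K n y * g n y - (\<Sum>i<m. K n (c i) * (indicator (Q i) y * g n y)))"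
        unfolding E_def by (rule ext) (simp only: left_diff_distrib sum_distrib_right mult.assoc)
      have sumint: "integrable lborel (\<lambda>y. \<Sum>i<m. K n (c i) * (indicator (Q i) y * g n y))"
      proof (rule Bochner_Integration.integrable_sum)
        fix i assume "i \<in> {..<m}"
        then show "integrable lborel (\<lambda>y. K n (c i) * (indicator (Q i) y * g n y))"
          using Qgint[of i n] by simp
      qed
      have EGint: "integrable lborel (\<lambda>y. E y * g n y)"
        unfolding Eeq by (intro Bochner_Integration.integrable_diff KGint sumint)
      have EGval: "(\<integral>y. E y * g n y \<partial>lborel) = (\<integral>y. K n y * g n y \<partial>lborel) - (\<Sum>i<m. K n (c i) * a n i)"
      proof -
        have "(\<integral>y. E y * g n y \<partial>lborel) = (\<integral>y. K n y * g n y \<partial>lborel) - (\<integral>y. (\<Sum>i<m. K n (c i) * (indicator (Q i) y * g n y)) \<partial>lborel)"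
          unfolding Eeq using KGint sumint by simp
        also have "(\<integral>y. (\<Sum>i<m. K n (c i) * (indicator (Q i) y * g n y)) \<partial>lborel) = (\<Sum>i<m. K n (c i) * a n i)"
        proof -
          have "(\<integral>y. (\<Sum>i<m. K n (c i) * (indicator (Q i) y * g n y)) \<partial>lborel) =
                (\<Sum>i<m. (\<integral>y. K n (c i) * (indicator (Q i) y * g n y) \<partial>lborel))"
            by (rule Bochner_Integration.integral_sum) (use Qgint in simp)
          also have "\<dots> = (\<Sum>i<m. K n (c i) * a n i)"
            unfolding a_def by simp
          finally show ?thesis .
        qed
        finally show ?thesis .
      qed
      note TL = tail[of n R]
      have EGbnd: "\<bar>\<integral>y. E y * g n y \<partial>lborel\<bar> < 2 * e / 3"
      proof -
        have "\<bar>\<integral>y. E y * g n y \<partial>lborel\<bar> \<le> (\<integral>y. \<bar>E y * g n y\<bar> \<partial>lborel)" by (rule integral_abs_bound)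
        also have "\<dots> \<le> (\<integral>y. B0 * \<delta> * \<bar>g n y\<bar> + B0 * (\<bar>g n y\<bar> * wt y * indicator {y. real R < norm y} y) \<partial>lborel)"
        proof (rule integral_mono)
          show "integrable lborel (\<lambda>y. \<bar>E y * g n y\<bar>)" using EGint by simp
          show "integrable lborel (\<lambda>y. B0 * \<delta> * \<bar>g n y\<bar> + B0 * (\<bar>g n y\<bar> * wt y * indicator {y. real R < norm y} y))"
            using gabs(1)[of n] TL by (intro Bochner_Integration.integrable_add integrable_mult_right) auto
          fix y
          have "\<bar>E y * g n y\<bar> = \<bar>E y\<bar> * \<bar>g n y\<bar>" by (simp add: abs_mult)
          also have "\<dots> \<le> (B0 * \<delta> + B0 * wt y * indicator {y. real R < norm y} y) * \<bar>g n y\<bar>"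
            by (intro mult_right_mono Ebnd) auto
          also have "\<dots> = B0 * \<delta> * \<bar>g n y\<bar> + B0 * (\<bar>g n y\<bar> * wt y * indicator {y. real R < norm y} y)"
            by (simp add: algebra_simps)
          finally show "\<bar>E y * g n y\<bar> \<le> B0 * \<delta> * \<bar>g n y\<bar> + B0 * (\<bar>g n y\<bar> * wt y * indicator {y. real R < norm y} y)" .
        qed
        also have "\<dots> = B0 * \<delta> * (\<integral>y. \<bar>g n y\<bar> \<partial>lborel) + B0 * (\<integral>y. \<bar>g n y\<bar> * wt y * indicator {y. real R < norm y} y \<partial>lborel)"
          using gabs(1)[of n] TL by simp
        also have "\<dots> \<le> B0 * \<delta> * (Dh * Cu) + B0 * (T R powr (1/q) * Cu)"
          using gabs(2)[of n] TL B0(2) \<delta>0 by (intro add_mono mult_left_mono) auto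
        also have "\<dots> < e / 3 + e / 3" using \<delta>b Rb by linarith
        finally show ?thesis by simp
      qed
      have "\<bar>\<integral>y. K n y * g n y \<partial>lborel\<bar> \<le> \<bar>\<integral>y. E y * g n y \<partial>lborel\<bar> + \<bar>\<Sum>i<m. K n (c i) * a n i\<bar>"
        using EGval by linarith
      also have "\<dots> < 2 * e / 3 + e / 3" using EGbnd N1[OF n] by linarith
      finally show "norm ((\<integral>y. K n y * g n y \<partial>lborel) - 0) < e" by simp
    qed
  qed
  show ?thesis
  proof (intro conjI allI)
    fix n
    show "integrable (lborel \<Otimes>\<^sub>M lborel)
            (\<lambda>(x, y). ln (1 + norm (x - y)) * \<bar>U n x\<bar> powr p * \<bar>u y\<bar> powr (p - 2) * u y * (U n y - u y))"
      using Fint[of n] unfolding F_def .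
  next
    show "(\<lambda>n. \<integral>(x, y). ln (1 + norm (x - y)) * \<bar>U n x\<bar> powr p * \<bar>u y\<bar> powr (p - 2) * u y * (U n y - u y)
              \<partial>(lborel \<Otimes>\<^sub>M lborel)) \<longlonglongrightarrow> 0"
      using mainlim Fiter unfolding F_def by simp
  qed
qed

end
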